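(* Let $q>1$ be a prime number and $0<j\le q$. Then: (1) $\bar{\mathsf{L}}^j_q$ is strongly maximal with respect to $\mathsf{CPL}$, and its consequence relation is the least structural finitary consequence relation extending $\vDash_{\mathsf{L}^j_q}$ that validates the rule $j(\varphi\wedge\neg\varphi)/(\psi\vee\neg\psi)^q$ (for all formulas $\varphi,\psi$); (2) $\mathsf{L}^j_q$ is strongly maximal with respect to $\bar{\mathsf{L}}^j_q$.
   Context: $\mathbf{ŁV}_{n+1}=(\{0,\frac1n,\dots,1\},\neg,\to)$ with $\neg x=1-x$, $x\to y=\min\{1,1-x+y\}$; derived: $x\oplus y=\neg x\to y$, $x\otimes y=\neg(x\to\neg y)$, $x\vee y=(x\to y)\to y$, $x\wedge y=\neg(\neg x\vee\neg y)$; $j\alpha$ is $\alpha\oplus\cdots\oplus\alpha$ ($j$ times) and $\alpha^q$ is $\alpha\otimes\cdots\otimes\alpha$ ($q$ times). $F_{j/q}=\{x:x\ge j/q\}$; $\mathsf{L}^j_q=\langle\mathbf{ŁV}_{q+1},F_{j/q}\rangle$; $\bar{\mathsf{L}}^j_q=\langle\mathbf{ŁV}_{q+1}\times\mathbf{ŁV}_2,F_{j/q}\times\{1\}\rangle$; $\mathsf{CPL}=\langle\mathbf{ŁV}_2,\{1\}\rangle$ over $\{\neg,\to\}$. Matrix consequence: every evaluation sending the premises into the designated set sends the conclusion into it. $L_1$ is strongly maximal w.r.t. $L_2$ if ${\vdash_{L_1}}\subsetneq{\vdash_{L_2}}$ and for every finitary rule $\varphi_1,\dots,\varphi_k/\psi$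 with $\varphi_1,\dots,\varphi_k\vdash_{L_2}\psi$ but $\varphi_1,\dots,\varphi_k\nvdash_{L_1}\psi$, the least consequence relation extending $\vdash_{L_1}$ in which $\sigma(\varphi_1),\dots,\sigma(\varphi_k)\vdash\sigma(\psi)$ for all substitutions $\sigma$ coincides with $\vdash_{L_2}$. *)

theory Defs
  imports Complex_Main "HOL-Computational_Algebra.Primes"
begin

datatype fm = Var nat | Neg fm | Imp fm fm

definition Oplus :: "fm \<Rightarrow> fm \<Rightarrow> fm" where "Oplus a b = Imp (Neg a) b"
definition Otimes :: "fm \<Rightarrow> fm \<Rightarrow> fm" where "Otimes a b = Neg (Imp a (Neg b))"
definition Vee :: "fm \<Rightarrow> fm \<Rightarrow> fm" where "Vee a b = Imp (Imp a b) b"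
definition Wedge :: "fm \<Rightarrow> fm \<Rightarrow> fm" where "Wedge a b = Neg (Vee (Neg a) (Neg b))"

text \<open>j a = a oplus ... oplus a (j times), a^q = a otimes ... otimes a (q times);
  only used for j, q >= 1 (the 0 clause is an irrelevant default).\<close>
fun nmul :: "nat \<Rightarrow> fm \<Rightarrow> fm" where
  "nmul 0 a = a"
| "nmul (Suc 0) a = a"
| "nmul (Suc (Suc n)) a = Oplus (nmul (Suc n) a) a"

fun npow :: "nat \<Rightarrow> fm \<Rightarrow> fm" where
  "npow 0 a = a"
| "npow (Suc 0) a = a"
| "npow (Suc (Suc n)) a = Otimes (npow (Suc n) a) a"

fun subst :: "(nat \<Rightarrow> fm) \<Rightarrow> fm \<Rightarrow> fm" where
  "subst \<sigma> (Var n) = \<sigma> n"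
| "subst \<sigma> (Neg a) = Neg (subst \<sigma> a)"
| "subst \<sigma> (Imp a b) = Imp (subst \<sigma> a) (subst \<sigma> b)"

record 'a matrix =
  car :: "'a set"
  mneg :: "'a \<Rightarrow> 'a"
  mimp :: "'a \<Rightarrow> 'a \<Rightarrow> 'a"
  des :: "'a set"

fun eval :: "'a matrix \<Rightarrow> (nat \<Rightarrow> 'a) \<Rightarrow> fm \<Rightarrow> 'a" where
  "eval M v (Var n) = v n"
| "eval M v (Neg a) = mneg M (eval M v a)"
| "eval M v (Imp a b) = mimp M (eval M v a) (eval M v b)"

definition mcons :: "'a matrix \<Rightarrow> fm set \<Rightarrow> fm \<Rightarrow> bool" where
  "mcons M \<Gamma> \<phi> \<longleftrightarrow>
     (\<forall>v. (\<forall>n. v n \<in> car M) \<longrightarrow> (\<forall>\<gamma>\<in>\<Gamma>. eval M v \<gamma> \<in> des M) \<longrightarrow> eval M v \<phi> \<in> des M)"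

definition LV :: "nat \<Rightarrow> real set" where
  "LV n = {real k / real n | k. k \<le> n}"   \<comment> \<open>universe of LV_{n+1}\<close>

definition luk_neg :: "real \<Rightarrow> real" where "luk_neg x = 1 - x"
definition luk_imp :: "real \<Rightarrow> real \<Rightarrow> real" where "luk_imp x y = min 1 (1 - x + y)"

definition Lm :: "nat \<Rightarrow> nat \<Rightarrow> real matrix" where
  "Lm j q = \<lparr> car = LV q, mneg = luk_neg, mimp = luk_imp,
             des = {x \<in> LV q. x \<ge> real j / real q} \<rparr>"

definition Lbar :: "nat \<Rightarrow> nat \<Rightarrow> (real \<times> real) matrix" where
  "Lbar j q = \<lparr> car = LV q \<times> LV 1,
               mneg = (\<lambda>(x, y). (luk_neg x, luk_neg y)),
               mimp = (\<lambda>(x, y) (x', y'). (luk_imp x x', luk_imp y y')),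
               des = {x \<in> LV q. x \<ge> real j / real q} \<times> {1} \<rparr>"

definition CPL :: "real matrix" where
  "CPL = \<lparr> car = LV 1, mneg = luk_neg, mimp = luk_imp, des = {1} \<rparr>"

definition cons_rel :: "(fm set \<Rightarrow> fm \<Rightarrow> bool) \<Rightarrow> bool" where
  "cons_rel C \<longleftrightarrow>
     (\<forall>\<Gamma> \<phi>. \<phi> \<in> \<Gamma> \<longrightarrow> C \<Gamma> \<phi>) \<and>
     (\<forall>\<Gamma> \<Delta> \<phi>. C \<Gamma> \<phi> \<longrightarrow> \<Gamma> \<subseteq> \<Delta> \<longrightarrow> C \<Delta> \<phi>) \<and>
     (\<forall>\<Gamma> \<Delta> \<phi>. (\<forall>\<delta>\<in>\<Delta>. C \<Gamma> \<delta>) \<longrightarrow> C (\<Gamma> \<union> \<Delta>) \<phi> \<longrightarrow> C \<Gamma> \<phi>)"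

definition least_ext :: "(fm set \<Rightarrow> fm \<Rightarrow> bool) \<Rightarrow> fm list \<Rightarrow> fm \<Rightarrow> fm set \<Rightarrow> fm \<Rightarrow> bool" where
  "least_ext R prems concl \<Gamma> \<phi> \<longleftrightarrow>
     (\<forall>C. cons_rel C \<longrightarrow> (\<forall>\<Delta> \<psi>. R \<Delta> \<psi> \<longrightarrow> C \<Delta> \<psi>) \<longrightarrow>
          (\<forall>\<sigma>. C (subst \<sigma> ` set prems) (subst \<sigma> concl)) \<longrightarrow> C \<Gamma> \<phi>)"

definition strongly_maximal :: "(fm set \<Rightarrow> fm \<Rightarrow> bool) \<Rightarrow> (fm set \<Rightarrow> fm \<Rightarrow> bool) \<Rightarrow> bool" where
  "strongly_maximal R1 R2 \<longleftrightarrow>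
     R1 < R2 \<and>
     (\<forall>prems concl. R2 (set prems) concl \<longrightarrow> \<not> R1 (set prems) concl \<longrightarrow>
        least_ext R1 prems concl = R2)"

end

theory Submission
  imports Defs "HOL-Number_Theory.Cong"
begin

fun E :: "(nat \<Rightarrow> real) \<Rightarrow> fm \<Rightarrow> real" where
  "E v (Var n) = v n"
| "E v (Neg a) = luk_neg (E v a)"
| "E v (Imp a b) = luk_imp (E v a) (E v b)"

lemma eval_Lm: "eval (Lm j q) v \<phi> = E v \<phi>"
  by (induction \<phi>) (auto simp: Lm_def)
lemma eval_CPL: "eval CPL v \<phi> = E v \<phi>"
  by (induction \<phi>) (auto simp: CPL_def)
lemma eval_Lbar: "eval (Lbar j q) V \<phi> = (E (fst \<circ> V) \<phi>, E (snd \<circ> V) \<phi>)"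
  by (induction \<phi>) (auto simp: Lbar_def split: prod.splits)

lemma LV_iff: "x \<in> LV q \<longleftrightarrow> (\<exists>k\<le>q. x = real k / real q)"
  unfolding LV_def by auto

lemma LV1: "LV 1 = {0,1}"
  unfolding LV_def by (auto simp: le_Suc_eq)

lemma LV_range: "q > 0 \<Longrightarrow> x \<in> LV q \<Longrightarrow> 0 \<le> x \<and> x \<le> 1"
  unfolding LV_def by auto

lemma LV_0: "0 \<in> LV q" unfolding LV_def by force
lemma LV_1: "q > 0 \<Longrightarrow> 1 \<in> LV q" unfolding LV_def
  by (rule CollectI, rule exI[of _ q]) auto

lemma LV_neg: assumes "q > 0" "x \<in> LV q" shows "luk_neg x \<in> LV q"
proof -
  obtain k where k: "k \<le> q" "x = real k / real q" using assms LV_iff by auto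
  have "luk_neg x = real (q - k) / real q" using k assms
    by (simp add: luk_neg_def of_nat_diff field_simps)
  then show ?thesis unfolding LV_iff by (intro exI[of _ "q-k"]) auto
qed

lemma LV_imp: assumes "q > 0" "x \<in> LV q" "y \<in> LV q" shows "luk_imp x y \<in> LV q"
proof -
  obtain k where k: "k \<le> q" "x = real k / real q" using assms LV_iff by auto
  obtain l where l: "l \<le> q" "y = real l / real q" using assms LV_iff by auto
  show ?thesis
  proof (cases "k \<le> l")
    case True
    then have "luk_imp x y = 1" using k l assms by (simp add: luk_imp_def divide_right_mono)
    then show ?thesis using LV_1 assms by simp
  next
    case False
    then have "luk_imp x y = real (q + l - k) / real q" unfolding k(2) l(2) using k l assms
      by (simp add: luk_imp_def of_nat_diff field_simps min_def)
    then show ?thesis unfolding LV_iff using False k l by (intro exI[of _ "q+l-k"]) auto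
  qed
qed

lemma E_LV: "q > 0 \<Longrightarrow> (\<forall>n. v n \<in> LV q) \<Longrightarrow> E v \<phi> \<in> LV q"
  by (induction \<phi>) (auto intro: LV_neg LV_imp)

lemma E_oplus: "E v (Oplus a b) = min 1 (E v a + E v b)"
  by (simp add: Oplus_def luk_imp_def luk_neg_def)
lemma E_otimes: "E v (Otimes a b) = max 0 (E v a + E v b - 1)"
  by (simp add: Otimes_def luk_imp_def luk_neg_def min_def max_def)
lemma E_vee: "E v a \<le> 1 \<Longrightarrow> E v b \<le> 1 \<Longrightarrow> E v (Vee a b) = max (E v a) (E v b)"
  by (simp add: Vee_def luk_imp_def luk_neg_def min_def max_def)
lemma E_wedge: "0 \<le> E v a \<Longrightarrow> 0 \<le> E v b \<Longrightarrow> E v (Wedge a b) = min (E v a) (E v b)"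
  by (simp add: Wedge_def Vee_def luk_imp_def luk_neg_def min_def max_def)

lemma E_nmul: "n \<ge> 1 \<Longrightarrow> 0 \<le> E v a \<Longrightarrow> E v a \<le> 1 \<Longrightarrow> E v (nmul n a) = min 1 (real n * E v a)"
proof (induction n a rule: nmul.induct)
  case (3 n a)
  show ?case
  proof (cases n)
    case 0 then show ?thesis using 3 by (simp add: E_oplus min_def)
  next
    case (Suc m) then show ?thesis using 3 by (simp add: E_oplus min_def algebra_simps)
  qed
qed auto

lemma E_npow: "n \<ge> 1 \<Longrightarrow> 0 \<le> E v a \<Longrightarrow> E v a \<le> 1 \<Longrightarrow> E v (npow n a) = max 0 (real n * E v a - (real n - 1))"
proof (induction n a rule: npow.induct)
  case (3 n a)
  show ?case
  proof (cases n)
    case 0 then show ?thesis using 3 by (simp add: E_otimes max_def)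
  next
    case (Suc m) then show ?thesis using 3 by (simp add: E_otimes max_def algebra_simps)
  qed
qed auto


lemma LV_nonbool: assumes "q > 0" "x \<in> LV q" "x \<noteq> 0" "x \<noteq> 1"
  shows "1 / real q \<le> x" "x \<le> 1 - 1 / real q"
proof -
  obtain k where k: "k \<le> q" "x = real k / real q" using assms LV_iff by auto
  have "k \<ge> 1" using k assms by (cases k) auto
  moreover have "k \<noteq> q" using k assms by auto
  then have "k + 1 \<le> q" using k by auto
  ultimately show "1 / real q \<le> x" "x \<le> 1 - 1 / real q" using k assms
    by (auto simp: field_simps)
qed

definition boolf :: "nat \<Rightarrow> fm \<Rightarrow> fm" where "boolf n a = npow n (Vee a (Neg a))"

context
  fixes q :: nat and v :: "nat \<Rightarrow> real"
  assumes q: "q > 1" and v: "\<forall>n. v n \<in> LV q"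
begin

lemma q0: "q > 0" using q by simp

lemma ELV: "E v a \<in> LV q" using E_LV[OF q0 v] .
lemma E01: "0 \<le> E v a" "E v a \<le> 1" using LV_range[OF q0 ELV] by auto

lemma E_vee': "E v (Vee a b) = max (E v a) (E v b)" using E_vee E01 by simp
lemma E_wedge': "E v (Wedge a b) = min (E v a) (E v b)" using E_wedge E01 by simp
lemma E_nmul': "n \<ge> 1 \<Longrightarrow> E v (nmul n a) = min 1 (real n * E v a)" using E_nmul E01 by simp
lemma E_npow': "n \<ge> 1 \<Longrightarrow> E v (npow n a) = max 0 (real n * E v a - (real n - 1))" using E_npow E01 by simp

lemma E_FF: "E v (npow q a) = (if E v a = 1 then 1 else 0)"
proof (cases "E v a = 1")
  case True then show ?thesis using q by (simp add: E_npow')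
next
  case False
  have "E v a \<le> 1 - 1 / real q"
  proof (cases "E v a = 0")
    case True then show ?thesis using q by simp
  next
    case False2: False
    show ?thesis using LV_nonbool[OF q0 ELV False2 False] by simp
  qed
  then have "real q * E v a \<le> real q - 1" using q0 by (simp add: field_simps)
  then show ?thesis using False q by (simp add: E_npow' max_def)
qed


lemma E_boolf: "E v (boolf q a) = (if E v a = 0 \<or> E v a = 1 then 1 else 0)"
proof (cases "E v a = 0 \<or> E v a = 1")
  case True then show ?thesis using q unfolding boolf_def
    by (auto simp add: E_npow' E_vee' luk_neg_def)
next
  case False
  have m: "max (E v a) (1 - E v a) \<le> 1 - 1 / real q"
    using LV_nonbool[OF q0 ELV] False by auto
  have "real q * max (E v a) (1 - E v a) \<le> real q * (1 - 1 / real q)"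
    using mult_left_mono[OF m] by simp
  also have "\<dots> = real q - 1" using q0 by (simp add: field_simps)
  finally show ?thesis using False q unfolding boolf_def by (simp add: E_npow' E_vee' luk_neg_def max_def)
qed

end

definition fracadd :: "nat \<Rightarrow> fm \<Rightarrow> fm \<Rightarrow> fm" where
  "fracadd n a b = Vee (Wedge (Oplus a b) (Neg (npow n (Oplus a b)))) (Wedge (Otimes a b) (npow n (Oplus a b)))"

fun gfm :: "nat \<Rightarrow> nat \<Rightarrow> fm \<Rightarrow> fm" where
  "gfm n 0 a = Wedge a (Neg (npow n a))"
| "gfm n (Suc m) a = fracadd n (gfm n m a) a"

fun Wfm :: "nat \<Rightarrow> nat \<Rightarrow> fm \<Rightarrow> fm" where
  "Wfm n 0 a = gfm n 0 a"
| "Wfm n (Suc m) a = Wedge (Wfm n m a) (gfm n (Suc m) a)"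

definition hfm :: "nat \<Rightarrow> fm \<Rightarrow> fm" where "hfm n a = Wfm n (n - 2) a"

context
  fixes q :: nat and v :: "nat \<Rightarrow> real"
  assumes q: "q > 1" and v: "\<forall>n. v n \<in> LV q"
begin

lemma E_fracadd:
  assumes a: "E v a = real A / real q" and b: "E v b = real B / real q" and AB: "A < q" "B \<le> q"
  shows "E v (fracadd q a b) = real ((A + B) mod q) / real q"
proof (cases "A + B < q")
  case True
  have s: "E v (Oplus a b) = real (A + B) / real q" using True q
    by (simp add: E_oplus a b add_divide_distrib[symmetric])
  have s1: "E v (Oplus a b) \<noteq> 1" using True q by (simp add: s)
  have p: "E v (Otimes a b) = 0" using True q
    by (simp add: E_otimes a b add_divide_distrib[symmetric] field_simps)
  show ?thesis using True s1 unfolding fracadd_def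
    by (simp add: E_vee'[OF q v] E_wedge'[OF q v] E_FF[OF q v] luk_neg_def s p E01[OF q v])
next
  case False
  have s: "E v (Oplus a b) = 1" using False q
    by (simp add: E_oplus a b add_divide_distrib[symmetric] field_simps)
  have m: "(A + B) mod q = A + B - q" using False AB
    by (simp add: mod_if le_mod_geq)
  have p: "E v (Otimes a b) = real (A + B - q) / real q" using False q
    by (simp add: E_otimes a b of_nat_diff field_simps)
  have "min (E v (Otimes a b)) 1 = E v (Otimes a b)" using E01[OF q v] by simp
  then show ?thesis unfolding fracadd_def m
    by (simp add: E_vee'[OF q v] E_wedge'[OF q v] E_FF[OF q v] luk_neg_def s p E01[OF q v])
qed

lemma E_gfm:
  assumes a: "E v a = real k / real q" and k: "k \<le> q"
  shows "E v (gfm q m a) = real ((Suc m * k) mod q) / real q"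
proof (induction m)
  case 0
  show ?case
  proof (cases "k = q")
    case True then show ?thesis using q a
      by (simp add: E_wedge'[OF q v] E_FF[OF q v] luk_neg_def)
  next
    case False
    then have "k < q" using k by simp
    then have "E v a \<noteq> 1" using a q by simp
    then show ?thesis using \<open>k < q\<close> a E01[OF q v, of a]
      by (simp add: E_wedge'[OF q v] E_FF[OF q v] luk_neg_def)
  qed
next
  case (Suc m)
  have "E v (gfm q (Suc m) a) = real ((Suc m * k mod q + k) mod q) / real q"
    using E_fracadd[OF Suc a] k q by simp
  also have "(Suc m * k mod q + k) mod q = (Suc (Suc m) * k) mod q"
    using mod_add_left_eq[of "Suc m * k" q k] by (simp add: add.commute add.left_commute)
  finally show ?case .
qed

lemma Wfm_le: "i \<le> m \<Longrightarrow> E v (Wfm q m a) \<le> E v (gfm q i a)"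
proof (induction m)
  case 0 then show ?case by simp
next
  case (Suc m) then show ?case by (auto simp: E_wedge'[OF q v] le_Suc_eq)
qed

lemma Wfm_ge: "(\<forall>i\<le>m. c \<le> E v (gfm q i a)) \<Longrightarrow> c \<le> E v (Wfm q m a)"
  by (induction m) (auto simp: E_wedge'[OF q v])

end

lemma inv_mod_prime:
  fixes q k :: nat
  assumes "prime q" "0 < k" "k < q"
  shows "\<exists>m. 0 < m \<and> m < q \<and> (m * k) mod q = 1"
proof -
  have "coprime k q" using assms
    by (metis coprime_commute dvd_imp_le not_le prime_imp_coprime)
  then obtain x where x: "[k * x = Suc 0] (mod q)" using cong_solve_coprime_nat by blast
  have q1: "q > 1" using assms prime_gt_1_nat by auto
  have "(x mod q * k) mod q = (k * x) mod q" by (metis mod_mult_right_eq mult.commute)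
  also have "\<dots> = 1" using x q1 unfolding cong_def by simp
  finally have e: "(x mod q * k) mod q = 1" .
  then have "x mod q \<noteq> 0" by (metis mod_0 mult_zero_left zero_neq_one)
  then show ?thesis using e q1 by (intro exI[of _ "x mod q"]) auto
qed

definition cst :: "nat \<Rightarrow> nat \<Rightarrow> fm \<Rightarrow> fm" where
  "cst n m a = (if m = 0 then Neg (Imp a a) else nmul m (hfm n a))"

definition fterm :: "nat \<Rightarrow> real \<Rightarrow> real \<Rightarrow> fm \<Rightarrow> fm" where
  "fterm n c b a = (let m = (SOME k. k \<le> n \<and> c = real k / real n) in
     if b = 1 then Vee (cst n m a) (boolf n a) else cst n m a)"

fun tfm :: "nat \<Rightarrow> nat list \<Rightarrow> fm" where
  "tfm n [] = Neg (Imp (Var 0) (Var 0))"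
| "tfm n (x # xs) = Vee (hfm n (Var x)) (tfm n xs)"

context
  fixes q :: nat and v :: "nat \<Rightarrow> real"
  assumes q: "q > 1" and v: "\<forall>n. v n \<in> LV q" and pq: "prime q"
begin

lemma E_hfm: "E v (hfm q a) = (if E v a = 0 \<or> E v a = 1 then 0 else 1 / real q)"
proof -
  obtain k where k: "k \<le> q" "E v a = real k / real q" using ELV[OF q v] LV_iff by blast
  show ?thesis
  proof (cases "E v a = 0 \<or> E v a = 1")
    case True
    then have "k = 0 \<or> k = q" using k q by auto
    then have g: "E v (gfm q 0 a) = 0" using E_gfm[OF q v k(2) k(1), of 0] by auto
    have "E v (Wfm q (q - 2) a) \<le> 0" using Wfm_le[OF q v, of 0 "q-2" a] g by simp
    moreover have "E v (Wfm q (q - 2) a) \<ge> 0" using E01[OF q v] by simp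
    ultimately show ?thesis using True unfolding hfm_def by simp
  next
    case False
    then have k0: "0 < k" "k < q" using k q by (auto simp: le_less)
    obtain m where m: "0 < m" "m < q" "(m * k) mod q = 1" using inv_mod_prime[OF pq k0] by blast
    have "E v (gfm q (m - 1) a) = 1 / real q" using E_gfm[OF q v k(2) k(1), of "m-1"] m by simp
    then have le: "E v (Wfm q (q - 2) a) \<le> 1 / real q" using Wfm_le[OF q v, of "m-1" "q-2" a] m by simp
    have "\<forall>i\<le>q-2. 1 / real q \<le> E v (gfm q i a)"
    proof (intro allI impI)
      fix i assume i: "i \<le> q - 2"
      have "\<not> q dvd Suc i" using i q by (auto dest: dvd_imp_le)
      moreover have "\<not> q dvd k" using k0 by (auto dest: dvd_imp_le)
      ultimately have "\<not> q dvd Suc i * k"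
        using pq prime_dvd_mult_iff by blast
      then have "(Suc i * k) mod q \<ge> 1" by (simp add: dvd_eq_mod_eq_0 Suc_le_eq)
      then show "1 / real q \<le> E v (gfm q i a)" using E_gfm[OF q v k(2) k(1), of i] q
        by (simp add: divide_right_mono)
    qed
    then have "1 / real q \<le> E v (Wfm q (q - 2) a)" by (rule Wfm_ge[OF q v])
    then show ?thesis using le False unfolding hfm_def by simp
  qed
qed

lemma E_cst: assumes "m \<le> q" shows "E v (cst q m a) = (if E v a = 0 \<or> E v a = 1 then 0 else real m / real q)"
proof (cases "m = 0")
  case True then show ?thesis unfolding cst_def by (simp add: luk_neg_def luk_imp_def)
next
  case False
  have "min 1 (real m * (1 / real q)) = real m / real q" using assms q by (simp add: min_def field_simps)
  then show ?thesis using False unfolding cst_def by (simp add: E_nmul'[OF q v] E_hfm)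
qed

lemma E_fterm: assumes c: "c \<in> LV q" and b: "b = 0 \<or> b = 1"
  shows "E v (fterm q c b a) = (if E v a = 0 \<or> E v a = 1 then b else c)"
proof -
  define m where "m = (SOME k. k \<le> q \<and> c = real k / real q)"
  have "\<exists>k. k \<le> q \<and> c = real k / real q" using c LV_iff by blast
  then have m: "m \<le> q" "c = real m / real q" unfolding m_def by (metis (mono_tags, lifting) someI_ex)+
  have c01: "0 \<le> c" "c \<le> 1" using LV_range[OF _ c] q by auto
  show ?thesis using b unfolding fterm_def Let_def m_def[symmetric]
    by (auto simp: E_vee'[OF q v] E_cst[OF m(1)] E_boolf[OF q v] m(2)[symmetric] c01)
qed

lemma E_tfm: "E v (tfm q xs) = (if \<exists>x\<in>set xs. v x \<noteq> 0 \<and> v x \<noteq> 1 then 1 / real q else 0)"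
proof (induction xs)
  case Nil then show ?case by (simp add: luk_neg_def luk_imp_def)
next
  case (Cons x xs)
  then show ?case by (auto simp: E_vee'[OF q v] E_hfm)
qed

end

lemma E_subst: "E v (subst \<sigma> \<phi>) = E (\<lambda>n. E v (\<sigma> n)) \<phi>"
  by (induction \<phi>) auto

lemma subst_nmul: "subst \<sigma> (nmul n a) = nmul n (subst \<sigma> a)"
  by (induction n a rule: nmul.induct) (auto simp: Oplus_def)
lemma subst_npow: "subst \<sigma> (npow n a) = npow n (subst \<sigma> a)"
  by (induction n a rule: npow.induct) (auto simp: Otimes_def)
lemma subst_Vee: "subst \<sigma> (Vee a b) = Vee (subst \<sigma> a) (subst \<sigma> b)" by (simp add: Vee_def)
lemma subst_Wedge: "subst \<sigma> (Wedge a b) = Wedge (subst \<sigma> a) (subst \<sigma> b)" by (simp add: Wedge_def Vee_def)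

fun bnd :: "fm \<Rightarrow> nat" where
  "bnd (Var n) = Suc n"
| "bnd (Neg a) = bnd a"
| "bnd (Imp a b) = max (bnd a) (bnd b)"

lemma E_agree: "(\<forall>i<bnd \<phi>. v i = v' i) \<Longrightarrow> E v \<phi> = E v' \<phi>"
  by (induction \<phi>) auto

lemma E_bool: "(\<forall>n. w n = 0 \<or> w n = 1) \<Longrightarrow> E w \<phi> = 0 \<or> E w \<phi> = 1"
  by (induction \<phi>) (auto simp: luk_neg_def luk_imp_def)

section \<open>Compactness of classical logic\<close>

definition satB :: "fm set \<Rightarrow> bool" where
  "satB \<Gamma> \<longleftrightarrow> (\<exists>w. (\<forall>n. w n = 0 \<or> w n = 1) \<and> (\<forall>\<gamma>\<in>\<Gamma>. E w \<gamma> = 1))"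

definition good :: "fm set \<Rightarrow> nat \<Rightarrow> (nat \<Rightarrow> real) \<Rightarrow> bool" where
  "good \<Gamma> n b \<longleftrightarrow> (\<forall>\<Gamma>0. \<Gamma>0 \<subseteq> \<Gamma> \<longrightarrow> finite \<Gamma>0 \<longrightarrow>
     (\<exists>w. (\<forall>i. w i = 0 \<or> w i = 1) \<and> (\<forall>i<n. w i = b i) \<and> (\<forall>\<gamma>\<in>\<Gamma>0. E w \<gamma> = 1)))"

primrec bs :: "fm set \<Rightarrow> nat \<Rightarrow> nat \<Rightarrow> real" where
  "bs \<Gamma> 0 = (\<lambda>_. 0)"
| "bs \<Gamma> (Suc n) = (if good \<Gamma> (Suc n) ((bs \<Gamma> n)(n := 1)) then (bs \<Gamma> n)(n := 1) else (bs \<Gamma> n)(n := 0))"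

lemma good_step:
  assumes g: "good \<Gamma> n b"
  shows "good \<Gamma> (Suc n) (b(n := 1)) \<or> good \<Gamma> (Suc n) (b(n := 0))"
proof (rule ccontr)
  assume "\<not> ?thesis"
  then have n1: "\<not> good \<Gamma> (Suc n) (b(n := 1))" and n0: "\<not> good \<Gamma> (Suc n) (b(n := 0))" by auto
  from n1 obtain G1 where G1: "G1 \<subseteq> \<Gamma>" "finite G1"
      "\<not> (\<exists>w. (\<forall>i. w i = 0 \<or> w i = 1) \<and> (\<forall>i<Suc n. w i = (b(n:=1)) i) \<and> (\<forall>\<gamma>\<in>G1. E w \<gamma> = 1))"
    unfolding good_def by blast
  from n0 obtain G2 where G2: "G2 \<subseteq> \<Gamma>" "finite G2"
      "\<not> (\<exists>w. (\<forall>i. w i = 0 \<or> w i = 1) \<and> (\<forall>i<Suc n. w i = (b(n:=0)) i) \<and> (\<forall>\<gamma>\<in>G2. E w \<gamma> = 1))"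
    unfolding good_def by blast
  obtain w where w: "\<forall>i. w i = 0 \<or> w i = 1" "\<forall>i<n. w i = b i" "\<forall>\<gamma>\<in>G1 \<union> G2. E w \<gamma> = 1"
  proof -
    have "G1 \<union> G2 \<subseteq> \<Gamma>" "finite (G1 \<union> G2)" using G1 G2 by auto
    then show ?thesis using g that unfolding good_def by blast
  qed
  show False
  proof (cases "w n = 1")
    case True
    then have a: "\<forall>i<Suc n. w i = (b(n:=1)) i" using w by (auto simp: less_Suc_eq)
    have c: "\<forall>\<gamma>\<in>G1. E w \<gamma> = 1" using w(3) by simp
    show False using G1(3) w(1) a c by blast
  next
    case False
    then have "w n = 0" using w by blast
    then have a: "\<forall>i<Suc n. w i = (b(n:=0)) i" using w by (auto simp: less_Suc_eq)
    have c: "\<forall>\<gamma>\<in>G2. E w \<gamma> = 1" using w(3) by simp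
    show False using G2(3) w(1) a c by blast
  qed
qed

lemma good_bs: assumes "\<forall>\<Gamma>0. \<Gamma>0 \<subseteq> \<Gamma> \<longrightarrow> finite \<Gamma>0 \<longrightarrow> satB \<Gamma>0" shows "good \<Gamma> n (bs \<Gamma> n)"
proof (induction n)
  case 0 then show ?case using assms unfolding good_def satB_def by simp
next
  case (Suc n) then show ?case using good_step[OF Suc] by auto
qed

lemma bs_bool: "bs \<Gamma> n i = 0 \<or> bs \<Gamma> n i = 1"
proof (induction n arbitrary: i)
  case 0 then show ?case by simp
next
  case (Suc n)
  have "((bs \<Gamma> n)(n := 1)) i = 0 \<or> ((bs \<Gamma> n)(n := 1)) i = 1" using Suc[of i] by (cases "i = n") auto
  moreover have "((bs \<Gamma> n)(n := 0)) i = 0 \<or> ((bs \<Gamma> n)(n := 0)) i = 1" using Suc[of i] by (cases "i = n") auto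
  ultimately show ?case by (simp only: bs.simps split: if_split) simp
qed

lemma bs_stable: "i < n \<Longrightarrow> bs \<Gamma> n i = bs \<Gamma> (Suc i) i"
proof (induction n)
  case 0 then show ?case by simp
next
  case (Suc n)
  show ?case
  proof (cases "i = n")
    case True then show ?thesis by simp
  next
    case False then have "i < n" using Suc by simp
    then show ?thesis using Suc False by simp
  qed
qed

lemma compactness:
  assumes "\<forall>\<Gamma>0. \<Gamma>0 \<subseteq> \<Gamma> \<longrightarrow> finite \<Gamma>0 \<longrightarrow> satB \<Gamma>0" shows "satB \<Gamma>"
proof -
  define B where "B = (\<lambda>i. bs \<Gamma> (Suc i) i)"
  have "\<forall>\<gamma>\<in>\<Gamma>. E B \<gamma> = 1"
  proof
    fix \<gamma> assume "\<gamma> \<in> \<Gamma>"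
    then obtain w where w: "\<forall>i<bnd \<gamma>. w i = bs \<Gamma> (bnd \<gamma>) i" "E w \<gamma> = 1"
    proof -
      have "{\<gamma>} \<subseteq> \<Gamma>" "finite {\<gamma>}" using \<open>\<gamma> \<in> \<Gamma>\<close> by auto
      then show ?thesis using good_bs[OF assms, of "bnd \<gamma>"] that unfolding good_def by blast
    qed
    have "\<forall>i<bnd \<gamma>. B i = w i" using w(1) bs_stable unfolding B_def by simp
    then have "E B \<gamma> = E w \<gamma>" by (rule E_agree)
    then show "E B \<gamma> = 1" using w(2) by simp
  qed
  moreover have "\<forall>n. B n = 0 \<or> B n = 1" unfolding B_def using bs_bool by simp
  ultimately show ?thesis unfolding satB_def by blast
qed


section \<open>Consequence relations\<close>

lemma cr_refl: "cons_rel C \<Longrightarrow> \<phi> \<in> \<Gamma> \<Longrightarrow> C \<Gamma> \<phi>" unfolding cons_rel_def by blast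
lemma cr_mono: "cons_rel C \<Longrightarrow> C \<Gamma> \<phi> \<Longrightarrow> \<Gamma> \<subseteq> \<Delta> \<Longrightarrow> C \<Delta> \<phi>" unfolding cons_rel_def by blast
lemma cr_cut: "cons_rel C \<Longrightarrow> (\<forall>\<delta>\<in>\<Delta>. C \<Gamma> \<delta>) \<Longrightarrow> C (\<Gamma> \<union> \<Delta>) \<phi> \<Longrightarrow> C \<Gamma> \<phi>"
  unfolding cons_rel_def by blast

lemma cons_rel_mcons: "cons_rel (mcons M)"
  unfolding cons_rel_def mcons_def by blast

lemma le_refl: "\<phi> \<in> \<Gamma> \<Longrightarrow> least_ext R p c \<Gamma> \<phi>"
  unfolding least_ext_def
proof (intro allI impI)
  fix C :: "fm set \<Rightarrow> fm \<Rightarrow> bool" assume "\<phi> \<in> \<Gamma>" "cons_rel C"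
  then show "C \<Gamma> \<phi>" using cr_refl by blast
qed
lemma le_mono: "least_ext R p c \<Gamma> \<phi> \<Longrightarrow> \<Gamma> \<subseteq> \<Delta> \<Longrightarrow> least_ext R p c \<Delta> \<phi>"
  unfolding least_ext_def
proof (intro allI impI)
  fix C :: "fm set \<Rightarrow> fm \<Rightarrow> bool"
  assume a: "\<forall>C. cons_rel C \<longrightarrow> (\<forall>\<Delta> \<psi>. R \<Delta> \<psi> \<longrightarrow> C \<Delta> \<psi>) \<longrightarrow> (\<forall>\<sigma>. C (subst \<sigma> ` set p) (subst \<sigma> c)) \<longrightarrow> C \<Gamma> \<phi>"
    and s: "\<Gamma> \<subseteq> \<Delta>"
    and c: "cons_rel C" "\<forall>\<Delta> \<psi>. R \<Delta> \<psi> \<longrightarrow> C \<Delta> \<psi>" "\<forall>\<sigma>. C (subst \<sigma> ` set p) (subst \<sigma> c)"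
  have "C \<Gamma> \<phi>" using a c by blast
  then show "C \<Delta> \<phi>" using cr_mono[OF c(1) _ s] by blast
qed
lemma le_cut: "(\<forall>\<delta>\<in>\<Delta>. least_ext R p c \<Gamma> \<delta>) \<Longrightarrow> least_ext R p c (\<Gamma> \<union> \<Delta>) \<phi> \<Longrightarrow> least_ext R p c \<Gamma> \<phi>"
  unfolding least_ext_def
proof (intro allI impI)
  fix C :: "fm set \<Rightarrow> fm \<Rightarrow> bool"
  assume a: "\<forall>\<delta>\<in>\<Delta>. \<forall>C. cons_rel C \<longrightarrow> (\<forall>\<Delta> \<psi>. R \<Delta> \<psi> \<longrightarrow> C \<Delta> \<psi>) \<longrightarrow> (\<forall>\<sigma>. C (subst \<sigma> ` set p) (subst \<sigma> c)) \<longrightarrow> C \<Gamma> \<delta>"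
    and b: "\<forall>C. cons_rel C \<longrightarrow> (\<forall>\<Delta> \<psi>. R \<Delta> \<psi> \<longrightarrow> C \<Delta> \<psi>) \<longrightarrow> (\<forall>\<sigma>. C (subst \<sigma> ` set p) (subst \<sigma> c)) \<longrightarrow> C (\<Gamma> \<union> \<Delta>) \<phi>"
    and c: "cons_rel C" "\<forall>\<Delta> \<psi>. R \<Delta> \<psi> \<longrightarrow> C \<Delta> \<psi>" "\<forall>\<sigma>. C (subst \<sigma> ` set p) (subst \<sigma> c)"
  have "\<forall>\<delta>\<in>\<Delta>. C \<Gamma> \<delta>" using a c by blast
  moreover have "C (\<Gamma> \<union> \<Delta>) \<phi>" using b c by blast
  ultimately show "C \<Gamma> \<phi>" using cr_cut[OF c(1)] by blast
qed

lemma cons_rel_least_ext: "cons_rel (least_ext R p c)"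
  unfolding cons_rel_def
proof (intro conjI allI impI)
  show "\<phi> \<in> \<Gamma> \<Longrightarrow> least_ext R p c \<Gamma> \<phi>" for \<Gamma> \<phi> by (rule le_refl)
  show "least_ext R p c \<Gamma> \<phi> \<Longrightarrow> \<Gamma> \<subseteq> \<Delta> \<Longrightarrow> least_ext R p c \<Delta> \<phi>" for \<Gamma> \<Delta> \<phi> by (rule le_mono)
  show "\<forall>\<delta>\<in>\<Delta>. least_ext R p c \<Gamma> \<delta> \<Longrightarrow> least_ext R p c (\<Gamma> \<union> \<Delta>) \<phi> \<Longrightarrow> least_ext R p c \<Gamma> \<phi>" for \<Gamma> \<Delta> \<phi> by (rule le_cut)
qed

lemma least_ext_R: "R \<Gamma> \<phi> \<Longrightarrow> least_ext R p c \<Gamma> \<phi>"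
  unfolding least_ext_def by blast
lemma least_ext_rule: "least_ext R p c (subst \<sigma> ` set p) (subst \<sigma> c)"
  unfolding least_ext_def by blast
lemma least_ext_le: "least_ext R p c \<Gamma> \<phi> \<Longrightarrow> cons_rel C \<Longrightarrow> (\<forall>\<Delta> \<psi>. R \<Delta> \<psi> \<longrightarrow> C \<Delta> \<psi>) \<Longrightarrow>
   (\<forall>\<sigma>. C (subst \<sigma> ` set p) (subst \<sigma> c)) \<Longrightarrow> C \<Gamma> \<phi>"
  unfolding least_ext_def by blast

lemma mcons_CPL: "mcons CPL \<Gamma> \<phi> \<longleftrightarrow>
  (\<forall>w. (\<forall>n. w n = 0 \<or> w n = 1) \<longrightarrow> (\<forall>\<gamma>\<in>\<Gamma>. E w \<gamma> = 1) \<longrightarrow> E w \<phi> = 1)"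
  unfolding mcons_def eval_CPL by (simp add: CPL_def LV1 del: One_nat_def)

context
  fixes q j :: nat
  assumes pq: "prime q" and q1: "q > 1" and j0: "0 < j" and jq: "j \<le> q"
begin

abbreviation "th \<equiv> real j / real q"

lemma th: "0 < th" "th \<le> 1" using q1 j0 jq by auto

lemma mcons_Lm: "mcons (Lm j q) \<Gamma> \<phi> \<longleftrightarrow>
  (\<forall>v. (\<forall>n. v n \<in> LV q) \<longrightarrow> (\<forall>\<gamma>\<in>\<Gamma>. th \<le> E v \<gamma>) \<longrightarrow> th \<le> E v \<phi>)"
  unfolding mcons_def eval_Lm using E_LV[of q] q1 by (auto simp: Lm_def)

lemma mcons_Lbar: "mcons (Lbar j q) \<Gamma> \<phi> \<longleftrightarrow>
  (\<forall>v w. (\<forall>n. v n \<in> LV q) \<longrightarrow> (\<forall>n. w n = 0 \<or> w n = 1) \<longrightarrow>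
     (\<forall>\<gamma>\<in>\<Gamma>. th \<le> E v \<gamma> \<and> E w \<gamma> = 1) \<longrightarrow> th \<le> E v \<phi> \<and> E w \<phi> = 1)"
proof
  assume a: "mcons (Lbar j q) \<Gamma> \<phi>"
  show "\<forall>v w. (\<forall>n. v n \<in> LV q) \<longrightarrow> (\<forall>n. w n = 0 \<or> w n = 1) \<longrightarrow>
     (\<forall>\<gamma>\<in>\<Gamma>. th \<le> E v \<gamma> \<and> E w \<gamma> = 1) \<longrightarrow> th \<le> E v \<phi> \<and> E w \<phi> = 1"
  proof (intro allI impI)
    fix v w :: "nat \<Rightarrow> real"
    assume v: "\<forall>n. v n \<in> LV q" and w: "\<forall>n. w n = 0 \<or> w n = 1" and g: "\<forall>\<gamma>\<in>\<Gamma>. th \<le> E v \<gamma> \<and> E w \<gamma> = 1"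
    define V where "V = (\<lambda>n. (v n, w n))"
    have fs: "fst \<circ> V = v" "snd \<circ> V = w" unfolding V_def by auto
    have "\<forall>n. V n \<in> car (Lbar j q)" using v w unfolding V_def Lbar_def LV1 by auto
    moreover have "\<forall>\<gamma>\<in>\<Gamma>. eval (Lbar j q) V \<gamma> \<in> des (Lbar j q)"
      using g E_LV[OF _ v] q1 unfolding eval_Lbar fs by (auto simp: Lbar_def)
    ultimately have "eval (Lbar j q) V \<phi> \<in> des (Lbar j q)" using a unfolding mcons_def by blast
    then show "th \<le> E v \<phi> \<and> E w \<phi> = 1" unfolding eval_Lbar fs by (auto simp: Lbar_def)
  qed
next
  assume a: "\<forall>v w. (\<forall>n. v n \<in> LV q) \<longrightarrow> (\<forall>n. w n = 0 \<or> w n = 1) \<longrightarrow>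
     (\<forall>\<gamma>\<in>\<Gamma>. th \<le> E v \<gamma> \<and> E w \<gamma> = 1) \<longrightarrow> th \<le> E v \<phi> \<and> E w \<phi> = 1"
  show "mcons (Lbar j q) \<Gamma> \<phi>" unfolding mcons_def
  proof (intro allI impI)
    fix V assume V: "\<forall>n. V n \<in> car (Lbar j q)" and g: "\<forall>\<gamma>\<in>\<Gamma>. eval (Lbar j q) V \<gamma> \<in> des (Lbar j q)"
    have v: "\<forall>n. (fst \<circ> V) n \<in> LV q" and w: "\<forall>n. (snd \<circ> V) n = 0 \<or> (snd \<circ> V) n = 1"
      using V unfolding Lbar_def LV1 by (auto simp: mem_Times_iff)
    have "\<forall>\<gamma>\<in>\<Gamma>. th \<le> E (fst \<circ> V) \<gamma> \<and> E (snd \<circ> V) \<gamma> = 1"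
      using g unfolding eval_Lbar by (auto simp: Lbar_def)
    then have "th \<le> E (fst \<circ> V) \<phi> \<and> E (snd \<circ> V) \<phi> = 1" using a v w by blast
    then show "eval (Lbar j q) V \<phi> \<in> des (Lbar j q)"
      unfolding eval_Lbar using E_LV[OF _ v, of \<phi>] q1 by (auto simp: Lbar_def comp_def)
  qed
qed


lemma v01: "(\<forall>n. w n = 0 \<or> w n = 1) \<Longrightarrow> \<forall>n. w n \<in> LV q"
  using LV_0 LV_1 q1 by (metis less_trans zero_less_one)

lemma bool_des: "x = 0 \<or> x = 1 \<Longrightarrow> th \<le> x \<longleftrightarrow> x = 1"
  using th by auto

lemma Lm_le_Lbar: "mcons (Lm j q) \<Gamma> \<phi> \<Longrightarrow> mcons (Lbar j q) \<Gamma> \<phi>"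
  unfolding mcons_Lm mcons_Lbar
proof (intro allI impI conjI)
  fix v w :: "nat \<Rightarrow> real"
  assume a: "\<forall>v. (\<forall>n. v n \<in> LV q) \<longrightarrow> (\<forall>\<gamma>\<in>\<Gamma>. th \<le> E v \<gamma>) \<longrightarrow> th \<le> E v \<phi>"
    and v: "\<forall>n. v n \<in> LV q" and w: "\<forall>n. w n = 0 \<or> w n = 1" and g: "\<forall>\<gamma>\<in>\<Gamma>. th \<le> E v \<gamma> \<and> E w \<gamma> = 1"
  show "th \<le> E v \<phi>" using a v g by blast
  have "th \<le> E w \<phi>" using a v01[OF w] g th by auto
  then show "E w \<phi> = 1" using bool_des[OF E_bool[OF w]] by simp
qed

lemma Lbar_le_CPL: "mcons (Lbar j q) \<Gamma> \<phi> \<Longrightarrow> mcons CPL \<Gamma> \<phi>"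
  unfolding mcons_CPL mcons_Lbar
proof (intro allI impI)
  fix w :: "nat \<Rightarrow> real"
  assume a: "\<forall>v w. (\<forall>n. v n \<in> LV q) \<longrightarrow> (\<forall>n. w n = 0 \<or> w n = 1) \<longrightarrow>
     (\<forall>\<gamma>\<in>\<Gamma>. th \<le> E v \<gamma> \<and> E w \<gamma> = 1) \<longrightarrow> th \<le> E v \<phi> \<and> E w \<phi> = 1"
    and w: "\<forall>n. w n = 0 \<or> w n = 1" and g: "\<forall>\<gamma>\<in>\<Gamma>. E w \<gamma> = 1"
  have "th \<le> E w \<phi> \<and> E w \<phi> = 1" using a[rule_format, of w w] v01[OF w] w g th by auto
  then show "E w \<phi> = 1" by simp
qed

lemma Lbar_char: "mcons (Lbar j q) \<Gamma> \<phi> \<Longrightarrow> mcons (Lm j q) \<Gamma> \<phi> \<or> \<not> satB \<Gamma>"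
proof (rule ccontr)
  assume a: "mcons (Lbar j q) \<Gamma> \<phi>" and "\<not> (mcons (Lm j q) \<Gamma> \<phi> \<or> \<not> satB \<Gamma>)"
  then have n: "\<not> mcons (Lm j q) \<Gamma> \<phi>" and s: "satB \<Gamma>" by auto
  obtain v where v: "\<forall>n. v n \<in> LV q" "\<forall>\<gamma>\<in>\<Gamma>. th \<le> E v \<gamma>" "\<not> th \<le> E v \<phi>"
    using n unfolding mcons_Lm by blast
  obtain w where w: "\<forall>n. w n = 0 \<or> w n = 1" "\<forall>\<gamma>\<in>\<Gamma>. E w \<gamma> = 1" using s unfolding satB_def by blast
  show False using a v w unfolding mcons_Lbar by blast
qed

lemma E_jrule:
  assumes v: "\<forall>n. v n \<in> LV q"
  shows "E v (nmul j (Wedge a (Neg a))) = (if E v a = 0 \<or> E v a = 1 then 0 else min 1 (real j * min (E v a) (1 - E v a)))"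
  using E01[OF q1 v, of a] j0 by (auto simp: E_nmul'[OF q1 v] E_wedge'[OF q1 v] luk_neg_def)

lemma jrule_nonbool:
  assumes v: "\<forall>n. v n \<in> LV q" and d: "th \<le> E v (nmul j (Wedge a (Neg a)))"
  shows "E v a \<noteq> 0 \<and> E v a \<noteq> 1"
  using d th E_jrule[OF v, of a] by (auto split: if_splits)

lemma jrule_des:
  assumes v: "\<forall>n. v n \<in> LV q" and a: "E v a = 1 / real q"
  shows "th \<le> E v (nmul j (Wedge a (Neg a)))"
proof -
  have "1 / real q \<le> 1 - 1 / real q" using q1 by (simp add: field_simps)
  moreover have "1 / real q \<noteq> 0" "1 / real q \<noteq> 1" using q1 by auto
  ultimately have "E v (nmul j (Wedge a (Neg a))) = min 1 (real j / real q)"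
    using a by (simp add: E_jrule[OF v])
  then show ?thesis using th by simp
qed

lemma boolf_des:
  assumes v: "\<forall>n. v n \<in> LV q"
  shows "th \<le> E v (boolf q a) \<longleftrightarrow> E v a = 0 \<or> E v a = 1"
  using th E_boolf[OF q1 v, of a] by auto

lemma subst_jrule: "subst \<sigma> (nmul j (Wedge (Var 0) (Neg (Var 0)))) = nmul j (Wedge (\<sigma> 0) (Neg (\<sigma> 0)))"
  by (simp add: subst_nmul subst_Wedge)
lemma subst_brule: "subst \<sigma> (npow q (Vee (Var 1) (Neg (Var 1)))) = boolf q (\<sigma> 1)"
  by (simp add: subst_npow subst_Vee boolf_def)


lemma key1:
  assumes C: "cons_rel C" and R: "\<forall>\<Delta> \<psi>. mcons (Lm j q) \<Delta> \<psi> \<longrightarrow> C \<Delta> \<psi>"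
    and rule: "\<forall>\<theta> y. C {nmul j (Wedge \<theta> (Neg \<theta>))} (boolf q (Var y))"
    and a: "mcons (Lbar j q) \<Gamma> \<phi>"
  shows "C \<Gamma> \<phi>"
proof (cases "mcons (Lm j q) \<Gamma> \<phi>")
  case True then show ?thesis using R by blast
next
  case False
  then have ns: "\<not> satB \<Gamma>" using Lbar_char[OF a] by blast
  then obtain \<Gamma>0 where G0: "\<Gamma>0 \<subseteq> \<Gamma>" "finite \<Gamma>0" "\<not> satB \<Gamma>0" using compactness by blast
  define N where "N = Max (insert 0 (bnd ` \<Gamma>0))"
  have N: "\<forall>\<gamma>\<in>\<Gamma>0. bnd \<gamma> \<le> N" unfolding N_def using G0(2) by simp
  define \<theta> where "\<theta> = tfm q [0..<N]"
  have "mcons (Lm j q) \<Gamma>0 (nmul j (Wedge \<theta> (Neg \<theta>)))"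
    unfolding mcons_Lm
  proof (intro allI impI)
    fix v assume v: "\<forall>n. v n \<in> LV q" and g: "\<forall>\<gamma>\<in>\<Gamma>0. th \<le> E v \<gamma>"
    have "\<exists>x\<in>set [0..<N]. v x \<noteq> 0 \<and> v x \<noteq> 1"
    proof (rule ccontr)
      assume nx: "\<not> ?thesis"
      define w where "w = (\<lambda>n. if n < N then v n else 0)"
      have w: "\<forall>n. w n = 0 \<or> w n = 1" using nx unfolding w_def by auto
      have "\<forall>\<gamma>\<in>\<Gamma>0. E w \<gamma> = 1"
      proof
        fix \<gamma> assume \<gamma>: "\<gamma> \<in> \<Gamma>0"
        have "E w \<gamma> = E v \<gamma>" using N \<gamma> unfolding w_def by (intro E_agree) auto
        then show "E w \<gamma> = 1" using g \<gamma> bool_des[OF E_bool[OF w, of \<gamma>]] by simp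
      qed
      then show False using G0(3) w unfolding satB_def by blast
    qed
    then have "E v \<theta> = 1 / real q" unfolding \<theta>_def using E_tfm[OF q1 v pq] by simp
    then show "th \<le> E v (nmul j (Wedge \<theta> (Neg \<theta>)))" by (rule jrule_des[OF v])
  qed
  then have "C \<Gamma>0 (nmul j (Wedge \<theta> (Neg \<theta>)))" using R by blast
  then have j1: "C \<Gamma> (nmul j (Wedge \<theta> (Neg \<theta>)))" using cr_mono[OF C] G0(1) by blast
  have bools: "\<forall>\<delta> \<in> range (\<lambda>y. boolf q (Var y)). C \<Gamma> \<delta>"
  proof
    fix \<delta> assume "\<delta> \<in> range (\<lambda>y. boolf q (Var y))"
    then obtain y where y: "\<delta> = boolf q (Var y)" by blast
    have "C {nmul j (Wedge \<theta> (Neg \<theta>))} \<delta>" using rule y by simp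
    then have "C (\<Gamma> \<union> {nmul j (Wedge \<theta> (Neg \<theta>))}) \<delta>" using cr_mono[OF C] by blast
    then show "C \<Gamma> \<delta>" using cr_cut[OF C] j1 by blast
  qed
  have "mcons (Lm j q) (\<Gamma> \<union> range (\<lambda>y. boolf q (Var y))) \<phi>"
    unfolding mcons_Lm
  proof (intro allI impI)
    fix v assume v: "\<forall>n. v n \<in> LV q" and g: "\<forall>\<gamma>\<in>\<Gamma> \<union> range (\<lambda>y. boolf q (Var y)). th \<le> E v \<gamma>"
    have vb: "\<forall>n. v n = 0 \<or> v n = 1"
    proof
      fix n have "th \<le> E v (boolf q (Var n))" using g by auto
      then show "v n = 0 \<or> v n = 1" using boolf_des[OF v, of "Var n"] by simp
    qed
    have "\<forall>\<gamma>\<in>\<Gamma>. E v \<gamma> = 1" using g bool_des[OF E_bool[OF vb]] by blast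
    then have False using ns vb unfolding satB_def by blast
    then show "th \<le> E v \<phi>" ..
  qed
  then have "C (\<Gamma> \<union> range (\<lambda>y. boolf q (Var y))) \<phi>" using R by blast
  then show ?thesis using cr_cut[OF C] bools by blast
qed

lemma key2:
  assumes C: "cons_rel C" and R: "\<forall>\<Delta> \<psi>. mcons (Lbar j q) \<Delta> \<psi> \<longrightarrow> C \<Delta> \<psi>"
    and b: "\<forall>y. C {} (boolf q (Var y))" and a: "mcons CPL \<Gamma> \<phi>"
  shows "C \<Gamma> \<phi>"
proof -
  have "mcons (Lbar j q) (\<Gamma> \<union> range (\<lambda>y. boolf q (Var y))) \<phi>"
    unfolding mcons_Lbar
  proof (intro allI impI)
    fix v w :: "nat \<Rightarrow> real"
    assume v: "\<forall>n. v n \<in> LV q" and w: "\<forall>n. w n = 0 \<or> w n = 1"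
      and g: "\<forall>\<gamma>\<in>\<Gamma> \<union> range (\<lambda>y. boolf q (Var y)). th \<le> E v \<gamma> \<and> E w \<gamma> = 1"
    have vb: "\<forall>n. v n = 0 \<or> v n = 1"
    proof
      fix n have "th \<le> E v (boolf q (Var n))" using g by auto
      then show "v n = 0 \<or> v n = 1" using boolf_des[OF v, of "Var n"] by simp
    qed
    have "\<forall>\<gamma>\<in>\<Gamma>. E v \<gamma> = 1" using g bool_des[OF E_bool[OF vb]] by blast
    then have "E v \<phi> = 1" using a vb unfolding mcons_CPL by blast
    moreover have "E w \<phi> = 1" using a w g unfolding mcons_CPL by blast
    ultimately show "th \<le> E v \<phi> \<and> E w \<phi> = 1" using th by simp
  qed
  then have "C (\<Gamma> \<union> range (\<lambda>y. boolf q (Var y))) \<phi>" using R by blast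
  moreover have "\<forall>\<delta>\<in>range (\<lambda>y. boolf q (Var y)). C \<Gamma> \<delta>" using b cr_mono[OF C] by blast
  ultimately show ?thesis using cr_cut[OF C] by blast
qed


lemma jrule_Lbar: "mcons (Lbar j q) {nmul j (Wedge \<theta> (Neg \<theta>))} \<psi>"
  unfolding mcons_Lbar
proof (intro allI impI)
  fix v w :: "nat \<Rightarrow> real"
  assume v: "\<forall>n. v n \<in> LV q" and w: "\<forall>n. w n = 0 \<or> w n = 1"
    and g: "\<forall>\<gamma>\<in>{nmul j (Wedge \<theta> (Neg \<theta>))}. th \<le> E v \<gamma> \<and> E w \<gamma> = 1"
  have "E w (nmul j (Wedge \<theta> (Neg \<theta>))) = 0"
    using E_jrule[OF v01[OF w], of \<theta>] E_bool[OF w, of \<theta>] by simp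
  then show "th \<le> E v \<psi> \<and> E w \<psi> = 1" using g by simp
qed

lemma subst_rule_inst:
  "subst (\<lambda>n. if n = 0 then \<theta> else Var y) ` set [nmul j (Wedge (Var 0) (Neg (Var 0)))] = {nmul j (Wedge \<theta> (Neg \<theta>))}"
  "subst (\<lambda>n. if n = 0 then \<theta> else Var y) (npow q (Vee (Var 1) (Neg (Var 1)))) = boolf q (Var y)"
  by (simp_all add: subst_jrule subst_brule del: One_nat_def)

lemma part1b: "mcons (Lbar j q) = least_ext (mcons (Lm j q))
             [nmul j (Wedge (Var 0) (Neg (Var 0)))] (npow q (Vee (Var 1) (Neg (Var 1))))"
proof (intro ext iffI)
  fix \<Gamma> \<phi>
  assume a: "mcons (Lbar j q) \<Gamma> \<phi>"
  show "least_ext (mcons (Lm j q)) [nmul j (Wedge (Var 0) (Neg (Var 0)))] (npow q (Vee (Var 1) (Neg (Var 1)))) \<Gamma> \<phi>"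
  proof (rule key1[OF cons_rel_least_ext _ _ a])
    show "\<forall>\<Delta> \<psi>. mcons (Lm j q) \<Delta> \<psi> \<longrightarrow> least_ext (mcons (Lm j q)) [nmul j (Wedge (Var 0) (Neg (Var 0)))] (npow q (Vee (Var 1) (Neg (Var 1)))) \<Delta> \<psi>"
      using least_ext_R by blast
    show "\<forall>\<theta> y. least_ext (mcons (Lm j q)) [nmul j (Wedge (Var 0) (Neg (Var 0)))] (npow q (Vee (Var 1) (Neg (Var 1)))) {nmul j (Wedge \<theta> (Neg \<theta>))} (boolf q (Var y))"
      using least_ext_rule[of "mcons (Lm j q)" "[nmul j (Wedge (Var 0) (Neg (Var 0)))]" "npow q (Vee (Var 1) (Neg (Var 1)))"]
      by (metis subst_rule_inst)
  qed
next
  fix \<Gamma> \<phi>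
  assume a: "least_ext (mcons (Lm j q)) [nmul j (Wedge (Var 0) (Neg (Var 0)))] (npow q (Vee (Var 1) (Neg (Var 1)))) \<Gamma> \<phi>"
  show "mcons (Lbar j q) \<Gamma> \<phi>"
  proof (rule least_ext_le[OF a cons_rel_mcons])
    show "\<forall>\<Delta> \<psi>. mcons (Lm j q) \<Delta> \<psi> \<longrightarrow> mcons (Lbar j q) \<Delta> \<psi>" using Lm_le_Lbar by blast
    show "\<forall>\<sigma>. mcons (Lbar j q) (subst \<sigma> ` set [nmul j (Wedge (Var 0) (Neg (Var 0)))]) (subst \<sigma> (npow q (Vee (Var 1) (Neg (Var 1)))))"
      by (simp add: subst_jrule jrule_Lbar del: One_nat_def)
  qed
qed

lemma lt_intro: "(\<And>\<Gamma> \<phi>. R1 \<Gamma> \<phi> \<Longrightarrow> R2 \<Gamma> \<phi>) \<Longrightarrow> R2 \<Gamma>0 \<phi>0 \<Longrightarrow> \<not> R1 \<Gamma>0 \<phi>0 \<Longrightarrow> R1 < R2"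
  by (auto simp: less_fun_def le_fun_def)

lemma LVq_1q: "1 / real q \<in> LV q" unfolding LV_iff by (rule exI[of _ 1]) (use q1 in auto)

lemma nb_1q: "1 / real q \<noteq> 0" "1 / real q \<noteq> 1" using q1 by auto

lemma Lbar_lt_CPL: "mcons (Lbar j q) < mcons CPL"
proof (rule lt_intro[of _ _ "{}" "boolf q (Var 0)"])
  show "mcons (Lbar j q) \<Gamma> \<phi> \<Longrightarrow> mcons CPL \<Gamma> \<phi>" for \<Gamma> \<phi> by (rule Lbar_le_CPL)
  show "mcons CPL {} (boolf q (Var 0))" unfolding mcons_CPL
  proof (intro allI impI)
    fix w :: "nat \<Rightarrow> real" assume w: "\<forall>n. w n = 0 \<or> w n = 1"
    show "E w (boolf q (Var 0)) = 1" using E_boolf[OF q1 v01[OF w]] w by simp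
  qed
  show "\<not> mcons (Lbar j q) {} (boolf q (Var 0))" unfolding mcons_Lbar
  proof
    assume a: "\<forall>v w. (\<forall>n. v n \<in> LV q) \<longrightarrow> (\<forall>n. w n = 0 \<or> w n = 1) \<longrightarrow>
      (\<forall>\<gamma>\<in>{}. th \<le> E v \<gamma> \<and> E w \<gamma> = 1) \<longrightarrow> th \<le> E v (boolf q (Var 0)) \<and> E w (boolf q (Var 0)) = 1"
    have v: "\<forall>n. (\<lambda>_. 1 / real q) n \<in> LV q" using LVq_1q by simp
    have "th \<le> E (\<lambda>_. 1 / real q) (boolf q (Var 0))" using a v by auto
    then show False using boolf_des[OF v] nb_1q by simp
  qed
qed

lemma Lm_lt_Lbar: "mcons (Lm j q) < mcons (Lbar j q)"
proof (rule lt_intro[of _ _ "{nmul j (Wedge (Var 0) (Neg (Var 0)))}" "boolf q (Var 1)"])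
  show "mcons (Lm j q) \<Gamma> \<phi> \<Longrightarrow> mcons (Lbar j q) \<Gamma> \<phi>" for \<Gamma> \<phi> by (rule Lm_le_Lbar)
  show "mcons (Lbar j q) {nmul j (Wedge (Var 0) (Neg (Var 0)))} (boolf q (Var 1))" by (rule jrule_Lbar)
  show "\<not> mcons (Lm j q) {nmul j (Wedge (Var 0) (Neg (Var 0)))} (boolf q (Var 1))" unfolding mcons_Lm
  proof
    assume a: "\<forall>v. (\<forall>n. v n \<in> LV q) \<longrightarrow> (\<forall>\<gamma>\<in>{nmul j (Wedge (Var 0) (Neg (Var 0)))}. th \<le> E v \<gamma>) \<longrightarrow> th \<le> E v (boolf q (Var 1))"
    have v: "\<forall>n. (\<lambda>_. 1 / real q) n \<in> LV q" using LVq_1q by simp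
    have "th \<le> E (\<lambda>_. 1 / real q) (nmul j (Wedge (Var 0) (Neg (Var 0))))" by (rule jrule_des[OF v]) simp
    then have "th \<le> E (\<lambda>_. 1 / real q) (boolf q (Var 1))" using a v by auto
    then show False using boolf_des[OF v] nb_1q by simp
  qed
qed


lemma CPL_subst: "mcons CPL (set p) c \<Longrightarrow> mcons CPL (subst \<sigma> ` set p) (subst \<sigma> c)"
  unfolding mcons_CPL
proof (intro allI impI)
  fix w :: "nat \<Rightarrow> real"
  assume a: "\<forall>w. (\<forall>n. w n = 0 \<or> w n = 1) \<longrightarrow> (\<forall>\<gamma>\<in>set p. E w \<gamma> = 1) \<longrightarrow> E w c = 1"
    and w: "\<forall>n. w n = 0 \<or> w n = 1" and g: "\<forall>\<gamma>\<in>subst \<sigma> ` set p. E w \<gamma> = 1"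
  have w': "\<forall>n. (\<lambda>n. E w (\<sigma> n)) n = 0 \<or> (\<lambda>n. E w (\<sigma> n)) n = 1" using E_bool[OF w] by simp
  have "\<forall>\<gamma>\<in>set p. E (\<lambda>n. E w (\<sigma> n)) \<gamma> = 1" using g by (simp add: E_subst)
  then show "E w (subst \<sigma> c) = 1" using a w' by (simp add: E_subst)
qed

lemma Lbar_subst: "mcons (Lbar j q) (set p) c \<Longrightarrow> mcons (Lbar j q) (subst \<sigma> ` set p) (subst \<sigma> c)"
  unfolding mcons_Lbar
proof (intro allI impI)
  fix v w :: "nat \<Rightarrow> real"
  assume a: "\<forall>v w. (\<forall>n. v n \<in> LV q) \<longrightarrow> (\<forall>n. w n = 0 \<or> w n = 1) \<longrightarrow>
     (\<forall>\<gamma>\<in>set p. th \<le> E v \<gamma> \<and> E w \<gamma> = 1) \<longrightarrow> th \<le> E v c \<and> E w c = 1"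
    and v: "\<forall>n. v n \<in> LV q" and w: "\<forall>n. w n = 0 \<or> w n = 1"
    and g: "\<forall>\<gamma>\<in>subst \<sigma> ` set p. th \<le> E v \<gamma> \<and> E w \<gamma> = 1"
  have v': "\<forall>n. (\<lambda>n. E v (\<sigma> n)) n \<in> LV q" using E_LV[OF _ v] q1 by simp
  have w': "\<forall>n. (\<lambda>n. E w (\<sigma> n)) n = 0 \<or> (\<lambda>n. E w (\<sigma> n)) n = 1" using E_bool[OF w] by simp
  have "\<forall>\<gamma>\<in>set p. th \<le> E (\<lambda>n. E v (\<sigma> n)) \<gamma> \<and> E (\<lambda>n. E w (\<sigma> n)) \<gamma> = 1" using g by (simp add: E_subst)
  then show "th \<le> E v (subst \<sigma> c) \<and> E w (subst \<sigma> c) = 1" using a v' w' by (simp add: E_subst)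
qed

lemma sm1_bool:
  assumes cp: "mcons CPL (set prems) concl" and nl: "\<not> mcons (Lbar j q) (set prems) concl"
  shows "least_ext (mcons (Lbar j q)) prems concl {} (boolf q (Var y))"
proof -
  let ?C = "least_ext (mcons (Lbar j q)) prems concl"
  obtain v w where v: "\<forall>n. v n \<in> LV q" and w: "\<forall>n. w n = 0 \<or> w n = 1"
    and g: "\<forall>\<gamma>\<in>set prems. th \<le> E v \<gamma> \<and> E w \<gamma> = 1" and n: "\<not> (th \<le> E v concl \<and> E w concl = 1)"
    using nl unfolding mcons_Lbar by blast
  have "E w concl = 1" using cp w g unfolding mcons_CPL by blast
  then have nv: "\<not> th \<le> E v concl" using n by simp
  define \<tau> where "\<tau> = (\<lambda>x. fterm q (v x) (w x) (Var y))"
  have E\<tau>: "(\<lambda>x. E a (\<tau> x)) = (if a y = 0 \<or> a y = 1 then w else v)" if a: "\<forall>n. a n \<in> LV q" for a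
    using E_fterm[OF q1 a pq, OF spec[OF v] spec[OF w]] unfolding \<tau>_def by auto
  have s1: "\<forall>\<delta>\<in>subst \<tau> ` set prems. ?C {} \<delta>"
  proof
    fix \<delta>' assume "\<delta>' \<in> subst \<tau> ` set prems"
    then obtain \<delta> where d: "\<delta> \<in> set prems" "\<delta>' = subst \<tau> \<delta>" by blast
    have "mcons (Lbar j q) {} (subst \<tau> \<delta>)" unfolding mcons_Lbar
    proof (intro allI impI)
      fix a b :: "nat \<Rightarrow> real" assume a: "\<forall>n. a n \<in> LV q" and b: "\<forall>n. b n = 0 \<or> b n = 1"
      have "th \<le> E a (subst \<tau> \<delta>)" using g d th unfolding E_subst E\<tau>[OF a] by auto
      moreover have "E b (subst \<tau> \<delta>) = 1" using g d b unfolding E_subst E\<tau>[OF v01[OF b]] by auto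
      ultimately show "th \<le> E a (subst \<tau> \<delta>) \<and> E b (subst \<tau> \<delta>) = 1" by simp
    qed
    then show "?C {} \<delta>'" using d least_ext_R by blast
  qed
  have "?C ({} \<union> subst \<tau> ` set prems) (subst \<tau> concl)" using least_ext_rule by simp
  then have s3: "?C {} (subst \<tau> concl)" using cr_cut[OF cons_rel_least_ext] s1 by blast
  have "mcons (Lm j q) {subst \<tau> concl} (boolf q (Var y))" unfolding mcons_Lm
  proof (intro allI impI)
    fix a :: "nat \<Rightarrow> real" assume a: "\<forall>n. a n \<in> LV q" and ga: "\<forall>\<gamma>\<in>{subst \<tau> concl}. th \<le> E a \<gamma>"
    have "a y = 0 \<or> a y = 1"
    proof (rule ccontr)
      assume "\<not> ?thesis"
      then have "E a (subst \<tau> concl) = E v concl" unfolding E_subst E\<tau>[OF a] by simp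
      then show False using ga nv by simp
    qed
    then show "th \<le> E a (boolf q (Var y))" using boolf_des[OF a] by simp
  qed
  then have "?C ({} \<union> {subst \<tau> concl}) (boolf q (Var y))" using Lm_le_Lbar least_ext_R by simp
  then show ?thesis using cr_cut[OF cons_rel_least_ext] s3 by blast
qed

lemma sm1: "strongly_maximal (mcons (Lbar j q)) (mcons CPL)"
  unfolding strongly_maximal_def
proof (intro conjI allI impI Lbar_lt_CPL)
  fix prems concl
  assume cp: "mcons CPL (set prems) concl" and nl: "\<not> mcons (Lbar j q) (set prems) concl"
  show "least_ext (mcons (Lbar j q)) prems concl = mcons CPL"
  proof (intro ext iffI)
    fix \<Gamma> \<phi> assume a: "least_ext (mcons (Lbar j q)) prems concl \<Gamma> \<phi>"
    show "mcons CPL \<Gamma> \<phi>"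
      using least_ext_le[OF a cons_rel_mcons] Lbar_le_CPL CPL_subst[OF cp] by blast
  next
    fix \<Gamma> \<phi> assume a: "mcons CPL \<Gamma> \<phi>"
    show "least_ext (mcons (Lbar j q)) prems concl \<Gamma> \<phi>"
      using key2[OF cons_rel_least_ext _ _ a] least_ext_R sm1_bool[OF cp nl] by blast
  qed
qed

lemma sm2_rule:
  assumes nl: "\<not> mcons (Lm j q) (set prems) concl"
  shows "least_ext (mcons (Lm j q)) prems concl {nmul j (Wedge \<theta> (Neg \<theta>))} (boolf q (Var y))"
proof -
  let ?C = "least_ext (mcons (Lm j q)) prems concl"
  let ?J = "nmul j (Wedge \<theta> (Neg \<theta>))"
  obtain v where v: "\<forall>n. v n \<in> LV q" and g: "\<forall>\<gamma>\<in>set prems. th \<le> E v \<gamma>" and nv: "\<not> th \<le> E v concl"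
    using nl unfolding mcons_Lm by blast
  define \<tau> where "\<tau> = (\<lambda>x. fterm q (v x) 0 \<theta>)"
  have E\<tau>: "(\<lambda>x. E a (\<tau> x)) = v" if a: "\<forall>n. a n \<in> LV q" and d: "th \<le> E a ?J" for a
    using E_fterm[OF q1 a pq, OF spec[OF v], of 0] jrule_nonbool[OF a d] unfolding \<tau>_def by auto
  have s1: "\<forall>\<delta>\<in>subst \<tau> ` set prems. ?C {?J} \<delta>"
  proof
    fix \<delta>' assume "\<delta>' \<in> subst \<tau> ` set prems"
    then obtain \<delta> where d: "\<delta> \<in> set prems" "\<delta>' = subst \<tau> \<delta>" by blast
    have "mcons (Lm j q) {?J} (subst \<tau> \<delta>)" unfolding mcons_Lm
    proof (intro allI impI)
      fix a :: "nat \<Rightarrow> real" assume a: "\<forall>n. a n \<in> LV q" and ga: "\<forall>\<gamma>\<in>{?J}. th \<le> E a \<gamma>"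
      have "(\<lambda>x. E a (\<tau> x)) = v" using E\<tau>[OF a] ga by simp
      then show "th \<le> E a (subst \<tau> \<delta>)" using g d unfolding E_subst by auto
    qed
    then show "?C {?J} \<delta>'" using d least_ext_R by blast
  qed
  have "?C (subst \<tau> ` set prems) (subst \<tau> concl)" by (rule least_ext_rule)
  then have "?C ({?J} \<union> subst \<tau> ` set prems) (subst \<tau> concl)" using cr_mono[OF cons_rel_least_ext] by blast
  then have s3: "?C {?J} (subst \<tau> concl)" using cr_cut[OF cons_rel_least_ext] s1 by blast
  have "mcons (Lm j q) ({?J} \<union> {subst \<tau> concl}) (boolf q (Var y))" unfolding mcons_Lm
  proof (intro allI impI)
    fix a :: "nat \<Rightarrow> real" assume a: "\<forall>n. a n \<in> LV q" and ga: "\<forall>\<gamma>\<in>{?J} \<union> {subst \<tau> concl}. th \<le> E a \<gamma>"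
    have "E a (subst \<tau> concl) = E v concl" unfolding E_subst using E\<tau>[OF a] ga by simp
    then show "th \<le> E a (boolf q (Var y))" using ga nv by simp
  qed
  then have "?C ({?J} \<union> {subst \<tau> concl}) (boolf q (Var y))" using least_ext_R by blast
  then show ?thesis using cr_cut[OF cons_rel_least_ext] s3 by blast
qed

lemma sm2: "strongly_maximal (mcons (Lm j q)) (mcons (Lbar j q))"
  unfolding strongly_maximal_def
proof (intro conjI allI impI Lm_lt_Lbar)
  fix prems concl
  assume cp: "mcons (Lbar j q) (set prems) concl" and nl: "\<not> mcons (Lm j q) (set prems) concl"
  show "least_ext (mcons (Lm j q)) prems concl = mcons (Lbar j q)"
  proof (intro ext iffI)
    fix \<Gamma> \<phi> assume a: "least_ext (mcons (Lm j q)) prems concl \<Gamma> \<phi>"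
    show "mcons (Lbar j q) \<Gamma> \<phi>"
      using least_ext_le[OF a cons_rel_mcons] Lm_le_Lbar Lbar_subst[OF cp] by blast
  next
    fix \<Gamma> \<phi> assume a: "mcons (Lbar j q) \<Gamma> \<phi>"
    show "least_ext (mcons (Lm j q)) prems concl \<Gamma> \<phi>"
      using key1[OF cons_rel_least_ext _ _ a] least_ext_R sm2_rule[OF nl] by blast
  qed
qed

end

theorem theorem5p7:
  fixes q j :: nat
  assumes "prime q" and "q > 1" and "0 < j" and "j \<le> q"
  shows "strongly_maximal (mcons (Lbar j q)) (mcons CPL) \<and>
         mcons (Lbar j q) =
           least_ext (mcons (Lm j q))
             [nmul j (Wedge (Var 0) (Neg (Var 0)))]
             (npow q (Vee (Var 1) (Neg (Var 1)))) \<and>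
         strongly_maximal (mcons (Lm j q)) (mcons (Lbar j q))"
  using sm1[OF assms] part1b[OF assms] sm2[OF assms] by blast

end
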